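(* (1) Let $\widetilde A,A,P\in GL_2(\mathbb{C})$, $E\in\mathbb{C}^{2\times 2}$ and $c\in S^1$ satisfy $cP^{*}AP=\widetilde A+E$ and $\|E\|\le \dfrac{|\det\widetilde A|}{8\|\widetilde A\|+4}$. Put $\Delta=\arg\big(\tfrac{\det\widetilde A}{\det A}\big)$. Then there exist $k\in\mathbb{Z}$ and $g\in\mathbb{C}$ with $$c=(-1)^k e^{i\Delta/2}+g,\qquad c^{-1}=(-1)^k e^{-i\Delta/2}+\overline{g},\qquad |g|\le \frac{\|E\|(8\|\widetilde A\|+4)}{|\det\widetilde A|},$$ and $$|\det P|=\Big|\frac{\det\widetilde A}{\det A}\Big|^{1/2}+r,\qquad |r|\le\frac{\|E\|(4\|\widetilde A\|+2)}{\sqrt{|\det\widetilde A\,\det A|}}.$$ (2) Let $F\in\mathbb{C}^{2\times 2}$ and $\widetilde B,B,P\in GL_2(\mathbb{C})$ satisfy $P^{T}BP=\widetilde B+F$ and $\|F\|\le\dfrac{|\det\widetilde B|}{8\|\widetilde B\|+4}$. Then, for a suitable choice of the square root, $$\det P=\sqrt{\frac{\det\widetilde B}{\det B}}+r,\qquad |r|\le\frac{\|F\|(4\|\widetilde B\|+2)}{\sqrt{|\det\widetilde B\,\det B|}}.$$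
   Context: $S^1=\{c\in\mathbb{C}:|c|=1\}$; $P^*$ is the conjugate transpose and $P^T$ the transpose of $P$. For $X=[x_{jk}]\in\mathbb{C}^{2\times 2}$, $\|X\|=\max_{j,k}|x_{jk}|$ is the max norm. $\arg$ denotes an argument of a nonzero complex number. *)

theory Defs
  imports "HOL-Analysis.Analysis"
begin

definition maxnorm :: "complex^2^2 \<Rightarrow> real" where
  "maxnorm X = Max {cmod (X $ j $ k) | j k. True}"

definition conj_transpose :: "complex^2^2 \<Rightarrow> complex^2^2" where
  "conj_transpose P = (\<chi> i j. cnj (P $ j $ i))"

definition scal_mat :: "complex \<Rightarrow> complex^2^2 \<Rightarrow> complex^2^2" where
  "scal_mat c M = (\<chi> i j. c * M $ i $ j)"

end

theory Submission
  imports Defs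
begin

lemma maxnorm_ge: "cmod (X $ i $ j) \<le> maxnorm X"
proof -
  have "{cmod (X $ j $ k) | j k. True} = (\<lambda>(j,k). cmod (X $ j $ k)) ` UNIV" by auto
  hence fin: "finite {cmod (X $ j $ k) | j k. True}" by simp
  show ?thesis unfolding maxnorm_def by (rule Max_ge[OF fin]) auto
qed

lemma maxnorm_nonneg: "0 \<le> maxnorm X"
  using maxnorm_ge[of X 1 1] norm_ge_zero order_trans by blast

lemma det_le: "cmod (det (X::complex^2^2)) \<le> 2 * (maxnorm X)^2"
proof -
  have "cmod (det X) \<le> cmod (X$1$1) * cmod (X$2$2) + cmod (X$1$2) * cmod (X$2$1)"
    unfolding det_2 using norm_triangle_ineq4[of "X$1$1 * X$2$2" "X$1$2 * X$2$1"] by (simp add: norm_mult)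
  also have "\<dots> \<le> maxnorm X * maxnorm X + maxnorm X * maxnorm X"
    by (intro add_mono mult_mono maxnorm_ge maxnorm_nonneg norm_ge_zero)
  finally show ?thesis by (simp add: power2_eq_square)
qed

lemma det_pert: "cmod (det ((X::complex^2^2) + Y) - det X) \<le> maxnorm Y * (4 * maxnorm X + 2 * maxnorm Y)"
proof -
  let ?x = "maxnorm X" and ?y = "maxnorm Y"
  have eq: "det (X + Y) - det X = (X$1$1 * Y$2$2 + Y$1$1 * X$2$2 - X$1$2 * Y$2$1 - Y$1$2 * X$2$1) + det Y"
    unfolding det_2 by (simp add: algebra_simps)
  have b: "\<And>i j k l. cmod (X$i$j * Y$k$l) \<le> ?x * ?y"
    by (simp add: norm_mult mult_mono maxnorm_ge maxnorm_nonneg)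
  have b2: "\<And>i j k l. cmod (Y$i$j * X$k$l) \<le> ?x * ?y"
    by (simp add: norm_mult mult_mono maxnorm_ge maxnorm_nonneg mult.commute[of "cmod (Y$_$_)"])
  have "cmod (X$1$1 * Y$2$2 + Y$1$1 * X$2$2 - X$1$2 * Y$2$1 - Y$1$2 * X$2$1)
     \<le> cmod (X$1$1 * Y$2$2) + cmod (Y$1$1 * X$2$2) + cmod (X$1$2 * Y$2$1) + cmod (Y$1$2 * X$2$1)"
    using norm_triangle_ineq4[of "X$1$1 * Y$2$2 + Y$1$1 * X$2$2 - X$1$2 * Y$2$1" "Y$1$2 * X$2$1"]
      norm_triangle_ineq4[of "X$1$1 * Y$2$2 + Y$1$1 * X$2$2" "X$1$2 * Y$2$1"]
      norm_triangle_ineq[of "X$1$1 * Y$2$2" "Y$1$1 * X$2$2"] by linarith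
  also have "\<dots> \<le> 4 * (?x * ?y)" using b[of 1 1 2 2] b2[of 1 1 2 2] b[of 1 2 2 1] b2[of 1 2 2 1] by linarith
  finally have "cmod (det (X + Y) - det X) \<le> 4 * (?x * ?y) + 2 * ?y^2"
    unfolding eq using det_le[of Y] norm_triangle_ineq[of "X$1$1 * Y$2$2 + Y$1$1 * X$2$2 - X$1$2 * Y$2$1 - Y$1$2 * X$2$1" "det Y"] by linarith
  thus ?thesis by (simp add: algebra_simps power2_eq_square)
qed

lemma det_ct: "det (conj_transpose P) = cnj (det P)"
  unfolding det_2 conj_transpose_def by simp

lemma det_scal: "det (scal_mat c M) = c^2 * det M"
  unfolding det_2 scal_mat_def by (simp add: algebra_simps power2_eq_square)

lemma maxnorm_pos: "invertible (X::complex^2^2) \<Longrightarrow> maxnorm X > 0"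
proof (rule ccontr)
  assume "invertible X" "\<not> maxnorm X > 0"
  hence "maxnorm X = 0" using maxnorm_nonneg[of X] by simp
  hence "\<And>i j. X$i$j = 0" using maxnorm_ge[of X] by (metis norm_le_zero_iff)
  hence "det X = 0" unfolding det_2 by simp
  thus False using \<open>invertible X\<close> invertible_det_nz by blast
qed


lemma cmod_add_sq: "(cmod (p + s))^2 = (cmod p)^2 + (cmod s)^2 + 2 * Re (p * cnj s)"
  unfolding cmod_power2 by (simp add: power2_eq_square algebra_simps)

lemma aux_div:
  fixes X Y Q U :: real
  assumes "X \<ge> 0" "Y \<ge> 23/16 * Q" "Q > 0" "X * Y = Q^2 * U"
  shows "X \<le> 16/23 * Q * U"
proof -
  have "X * (23/16 * Q) \<le> X * Y" using assms by (intro mult_left_mono) auto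
  hence "Q * (23/16 * X) \<le> Q * (Q * U)" using assms(4) by (simp add: power2_eq_square ac_simps)
  hence "23/16 * X \<le> Q * U" using assms(3) by (simp only: mult_le_cancel_left_pos)
  thus ?thesis by simp
qed

lemma root_core:
  fixes p q u s :: complex
  assumes h: "p^2 = q*(1+u)" and hu: "cmod u \<le> 9/16" and hs: "s^2 = q" and hr: "Re (p * cnj s) \<ge> 0"
  shows "(cmod (p - s))^2 \<le> 16/23 * cmod q * (cmod u)^2"
proof (cases "q = 0")
  case True
  hence "p = 0" "s = 0" using h hs by auto
  then show ?thesis by simp
next
  case False
  let ?Q = "cmod q"
  have Qp: "?Q > 0" using False by simp
  have "(p - s) * (p + s) = p^2 - s^2" by (simp add: power2_eq_square ring_distribs)
  also have "\<dots> = q * u" unfolding h hs by (simp add: ring_distribs)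
  finally have prod: "(p - s) * (p + s) = q * u" .
  hence "cmod ((p - s) * (p + s)) = cmod (q * u)" by simp
  hence "cmod (p - s) * cmod (p + s) = ?Q * cmod u" by (simp only: norm_mult)
  hence prod2: "(cmod (p - s))^2 * (cmod (p + s))^2 = ?Q^2 * (cmod u)^2"
    by (simp only: power_mult_distrib[symmetric])
  have "cmod (1 + u) \<ge> 1 - cmod u" using norm_triangle_ineq2[of 1 "-u"] by simp
  moreover have "cmod (p^2) = cmod (q*(1+u))" using h by simp
  hence "(cmod p)^2 = ?Q * cmod (1+u)" by (simp only: norm_mult norm_power)
  ultimately have "(cmod p)^2 \<ge> ?Q * (1 - cmod u)"
    using Qp mult_left_mono[of "1 - cmod u" "cmod (1+u)" ?Q] by simp
  moreover have "?Q * (7/16) \<le> ?Q * (1 - cmod u)" using hu Qp by (intro mult_left_mono) auto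
  ultimately have p2: "(cmod p)^2 \<ge> 7/16 * ?Q" by simp
  have "cmod (s^2) = ?Q" using hs by simp
  hence s2: "(cmod s)^2 = ?Q" by (simp only: norm_power)
  have Y: "(cmod (p + s))^2 \<ge> 23/16 * ?Q" using cmod_add_sq[of p s] p2 s2 hr by linarith
  show ?thesis using aux_div[OF _ Y Qp prod2] by simp
qed

lemma e_small:
  fixes a e \<delta> :: real
  assumes "a > 0" "e \<ge> 0" "e \<le> \<delta> / (8*a+4)" "\<delta> \<le> 2*a^2"
  shows "e \<le> a/4" "e * (4*a + 2*e) \<le> 9/16 * \<delta>"
proof -
  have h: "e * (8*a+4) \<le> \<delta>" using assms by (simp add: field_simps)
  have "e*(8*a+4) = a*(8*e) + 4*e" by (simp add: algebra_simps)
  hence "a*(8*e) \<le> \<delta>" using h assms(2) by linarith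
  moreover have "\<delta> \<le> a*(2*a)" using assms(4) by (simp add: power2_eq_square)
  ultimately have "a*(8*e) \<le> a*(2*a)" by linarith
  hence "8*e \<le> 2*a" using assms(1) by simp
  thus e4: "e \<le> a/4" by simp
  have "e * (4*a + 2*e) \<le> e * (9/2*a)" using e4 assms by (intro mult_left_mono) auto
  also have "\<dots> \<le> 9/16 * (e * (8*a+4))" using assms by (simp add: algebra_simps)
  also have "\<dots> \<le> 9/16 * \<delta>" using h by simp
  finally show "e * (4*a + 2*e) \<le> 9/16 * \<delta>" .
qed

lemma final_bound:
  fixes a e \<delta> m R U :: real
  assumes "a > 0" "e \<ge> 0" "e \<le> a/4" "\<delta> > 0" "m > 0" "R \<ge> 0"
    "R^2 \<le> 16/23 * (\<delta>/m) * U^2" "0 \<le> U" "U \<le> e*(4*a+2*e)/\<delta>"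
  shows "R \<le> e*(4*a+2)/sqrt(\<delta>*m)"
proof -
  have "U^2 \<le> (e*(4*a+2*e)/\<delta>)^2" using assms by (intro power_mono) auto
  hence "16/23 * (\<delta>/m) * U^2 \<le> 16/23 * (\<delta>/m) * (e*(4*a+2*e)/\<delta>)^2" using assms
    by (intro mult_left_mono) auto
  hence "R^2 \<le> 16/23 * (\<delta>/m) * (e*(4*a+2*e)/\<delta>)^2" using assms(7) by linarith
  also have "\<dots> = e^2 * (16/23 * (4*a+2*e)^2) / (\<delta>*m)" using assms
    by (simp add: field_simps power2_eq_square)
  also have "\<dots> \<le> e^2 * (4*a+2)^2 / (\<delta>*m)"
  proof -
    have "4*a+2*e \<le> 9/2*a" using assms by simp
    hence "(4*a+2*e)^2 \<le> (9/2*a)^2" using assms by (intro power_mono) auto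
    moreover have "(9/2*a)^2 = 81/4 * a^2" "(4*a+2)^2 = 16*a^2 + 16*a + 4"
      by (simp_all add: power2_eq_square algebra_simps)
    ultimately have "16/23 * (4*a+2*e)^2 \<le> (4*a+2)^2" using assms(1) zero_le_power2[of a]
      by linarith
    thus ?thesis using assms by (intro divide_right_mono mult_left_mono) auto
  qed
  also have "\<dots> = (e*(4*a+2)/sqrt(\<delta>*m))^2" using assms
    by (simp add: power_divide power_mult_distrib)
  finally have fin: "R^2 \<le> (e*(4*a+2)/sqrt(\<delta>*m))^2" .
  have "0 \<le> e*(4*a+2)/sqrt(\<delta>*m)" using assms by simp
  thus ?thesis using power2_le_imp_le[OF fin] by blast
qed

lemma unit_root:
  fixes c u :: complex and \<Delta> :: real
  assumes hc: "cmod c = 1" and hz: "1 + u \<noteq> 0"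
    and h: "c^2 = cis \<Delta> * ((1+u) / of_real (cmod (1+u)))"
  shows "\<exists>(k::int) g. c = (-1) powi k * cis (\<Delta>/2) + g \<and>
     inverse c = (-1) powi k * cis (- \<Delta> / 2) + cnj g \<and> (cmod g)^2 \<le> 2 * (cmod u)^2"
proof -
  define z where "z = 1 + u"
  define w where "w = z / of_real (cmod z)"
  have zn: "cmod z > 0" using hz z_def by simp
  have "w - z = z * of_real (1 / cmod z - 1)" unfolding w_def using zn by (simp add: field_simps)
  hence "cmod (w - z) = cmod z * cmod (complex_of_real (1 / cmod z - 1))" by (simp only: norm_mult)
  also have "\<dots> = cmod z * \<bar>1 / cmod z - 1\<bar>" by (simp only: norm_of_real)
  also have "\<dots> = \<bar>1 - cmod z\<bar>" using zn by (simp add: field_simps abs_mult[symmetric])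
  also have "\<dots> \<le> cmod u" unfolding z_def using norm_triangle_ineq3[of "1+u" 1] by (simp add: abs_minus_commute)
  finally have wz: "cmod (w - z) \<le> cmod u" .
  have w1: "cmod (w - 1) \<le> 2 * cmod u"
    using norm_triangle_ineq[of "w - z" "z - 1"] wz by (simp add: z_def)
  define v where "v = c * cis (- (\<Delta>/2))"
  have cv: "cmod v = 1" using hc by (simp add: v_def norm_mult)
  have "(cis (-(\<Delta>/2)))^2 = cis (-\<Delta>)" unfolding power2_eq_square cis_mult by simp
  hence cc: "cis \<Delta> * (cis (-(\<Delta>/2)))^2 = 1" using cis_mult[of \<Delta> "-\<Delta>"] by simp
  have v2: "v^2 = w" unfolding v_def w_def z_def using h cc
    by (simp add: power_mult_distrib)
  define s :: complex where "s = (if Re v \<ge> 0 then 1 else -1)"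
  define k :: int where "k = (if Re v \<ge> 0 then 0 else 1)"
  have sk: "s = (-1) powi k" unfolding s_def k_def by simp
  have "(cmod (v + s))^2 = 2 + 2 * Re (v * cnj s)" using cmod_add_sq[of v s] cv s_def by simp
  hence vs: "(cmod (v + s))^2 \<ge> 2" unfolding s_def by auto
  have "(v - s) * (v + s) = w - 1" using v2 s_def by (simp add: algebra_simps power2_eq_square)
  hence "cmod ((v - s) * (v + s)) = cmod (w - 1)" by simp
  hence "cmod (v - s) * cmod (v + s) = cmod (w - 1)" by (simp only: norm_mult)
  hence "(cmod (v - s))^2 * (cmod (v + s))^2 = (cmod (w - 1))^2"
    by (simp only: power_mult_distrib[symmetric])
  also have "\<dots> \<le> (2 * cmod u)^2" using w1 by (intro power_mono) auto
  finally have "(cmod (v - s))^2 * (cmod (v + s))^2 \<le> 4 * (cmod u)^2"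
    by (simp add: power_mult_distrib)
  moreover have "(cmod (v - s))^2 * 2 \<le> (cmod (v - s))^2 * (cmod (v + s))^2"
    using mult_left_mono[OF vs, of "(cmod (v - s))^2"] by simp
  ultimately have "(cmod (v - s))^2 * 2 \<le> 4 * (cmod u)^2" by linarith
  hence gb: "(cmod (v - s))^2 \<le> 2 * (cmod u)^2" by simp
  define g where "g = c - s * cis (\<Delta>/2)"
  have "g = cis (\<Delta>/2) * (v - s)" unfolding g_def v_def
    by (simp add: algebra_simps cis_mult flip: mult.assoc)
  hence gn: "cmod g = cmod (v - s)" by (simp add: norm_mult)
  have "c * cnj c = 1" using complex_norm_square[of c] hc by simp
  hence ic: "inverse c = cnj c" by (rule inverse_unique)
  have "cnj c = cnj s * cnj (cis (\<Delta>/2)) + cnj g" unfolding g_def by simp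
  moreover have "cnj s = s" unfolding s_def by simp
  moreover have "cnj (cis (\<Delta>/2)) = cis (- \<Delta> / 2)" by (simp add: cis_cnj)
  ultimately have "inverse c = s * cis (- \<Delta> / 2) + cnj g" using ic by simp
  hence c2: "inverse c = (-1) powi k * cis (- \<Delta> / 2) + cnj g" by (simp only: sk)
  have "c = s * cis (\<Delta>/2) + g" unfolding g_def by simp
  hence c1: "c = (-1) powi k * cis (\<Delta> / 2) + g" by (simp only: sk)
  have gg: "(cmod g)^2 \<le> 2 * (cmod u)^2" using gb gn by simp
  show ?thesis using c1 c2 gg by blast
qed


lemma g_bound:
  fixes a e \<delta> G U :: real
  assumes "a > 0" "e \<ge> 0" "e \<le> a/4" "\<delta> > 0" "G \<ge> 0" "G^2 \<le> 2 * U^2" "0 \<le> U" "U \<le> e*(4*a+2*e)/\<delta>"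
  shows "G \<le> e*(8*a+4)/\<delta>"
proof -
  have "U^2 \<le> (e*(4*a+2*e)/\<delta>)^2" using assms by (intro power_mono) auto
  hence "G^2 \<le> 2 * (e*(4*a+2*e)/\<delta>)^2" using assms(6) by linarith
  also have "\<dots> = e^2 * (2 * (4*a+2*e)^2) / \<delta>^2" by (simp add: power_divide power_mult_distrib)
  also have "\<dots> \<le> e^2 * (8*a+4)^2 / \<delta>^2"
  proof -
    have "4*a+2*e \<le> 9/2*a" using assms by simp
    hence "(4*a+2*e)^2 \<le> (9/2*a)^2" using assms by (intro power_mono) auto
    moreover have "(9/2*a)^2 = 81/4 * a^2" "(8*a+4)^2 = 64*a^2 + 64*a + 16"
      by (simp_all add: power2_eq_square algebra_simps)
    ultimately have "2 * (4*a+2*e)^2 \<le> (8*a+4)^2" using assms(1) zero_le_power2[of a]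
      by linarith
    thus ?thesis by (intro divide_right_mono mult_left_mono) auto
  qed
  also have "\<dots> = (e*(8*a+4)/\<delta>)^2" by (simp add: power_divide power_mult_distrib)
  finally have fin: "G^2 \<le> (e*(8*a+4)/\<delta>)^2" .
  have "0 \<le> e*(8*a+4)/\<delta>" using assms by simp
  thus ?thesis using power2_le_imp_le[OF fin] by blast
qed

lemma part1:
  fixes At A P E :: "complex^2^2" and c :: complex and \<Delta> :: real
  assumes iAt: "invertible At" and iA: "invertible A" and hc: "cmod c = 1"
    and heq: "scal_mat c (conj_transpose P ** A ** P) = At + E"
    and hE: "maxnorm E \<le> cmod (det At) / (8 * maxnorm At + 4)"
    and hD: "det At / det A = of_real (cmod (det At / det A)) * cis \<Delta>"
  shows "(\<exists>(k::int) (g::complex).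
          c = (-1) powi k * cis (\<Delta> / 2) + g \<and>
          inverse c = (-1) powi k * cis (- \<Delta> / 2) + cnj g \<and>
          cmod g \<le> maxnorm E * (8 * maxnorm At + 4) / cmod (det At)) \<and>
      (\<exists>r::real.
          cmod (det P) = sqrt (cmod (det At / det A)) + r \<and>
          \<bar>r\<bar> \<le> maxnorm E * (4 * maxnorm At + 2) / sqrt (cmod (det At * det A)))"
proof -
  define a where "a = maxnorm At"
  define e where "e = maxnorm E"
  define d where "d = det At"
  define \<beta> where "\<beta> = det A"
  define \<delta> where "\<delta> = cmod d"
  define m where "m = cmod \<beta>"
  define D where "D = det (At + E) - d"
  define u where "u = D / d"
  define q where "q = d / \<beta>"
  define \<rho> where "\<rho> = cmod q"
  have a0: "a > 0" unfolding a_def using maxnorm_pos[OF iAt] .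
  have e0: "e \<ge> 0" unfolding e_def by (rule maxnorm_nonneg)
  have d0: "d \<noteq> 0" unfolding d_def using iAt invertible_det_nz by blast
  have b0: "\<beta> \<noteq> 0" unfolding \<beta>_def using iA invertible_det_nz by blast
  have dl0: "\<delta> > 0" unfolding \<delta>_def using d0 by simp
  have m0: "m > 0" unfolding m_def using b0 by simp
  have dle: "\<delta> \<le> 2 * a^2" unfolding \<delta>_def d_def a_def by (rule det_le)
  have es: "e \<le> a/4" "e * (4*a + 2*e) \<le> 9/16 * \<delta>"
    using e_small[OF a0 e0 _ dle] hE unfolding e_def a_def \<delta>_def d_def by auto
  have Db: "cmod D \<le> e * (4*a + 2*e)" unfolding D_def e_def a_def d_def by (rule det_pert)
  have ub: "cmod u \<le> e * (4*a + 2*e) / \<delta>" unfolding u_def \<delta>_def using Db dl0 d0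
    by (simp add: norm_divide divide_right_mono \<delta>_def)
  have "e * (4*a + 2*e) / \<delta> \<le> 9/16" using es(2) dl0 by (simp add: divide_le_eq)
  hence u916: "cmod u \<le> 9/16" using ub by linarith
  have u1: "1 + u \<noteq> 0"
  proof
    assume "1 + u = 0" hence "u = -1" by (simp add: add_eq_0_iff)
    thus False using u916 by simp
  qed
  have "det (scal_mat c (conj_transpose P ** A ** P)) = c^2 * (cnj (det P) * \<beta> * det P)"
    by (simp add: det_scal det_mul det_ct \<beta>_def)
  also have "\<dots> = c^2 * of_real ((cmod (det P))^2) * \<beta>"
    using complex_norm_square[of "det P"] by (simp add: ac_simps)
  finally have "c^2 * of_real ((cmod (det P))^2) * \<beta> = d * (1 + u)"
    using heq d0 unfolding u_def D_def d_def by (simp add: field_simps)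
  hence main: "c^2 * of_real ((cmod (det P))^2) = q * (1 + u)"
    unfolding q_def using b0 by (simp add: field_simps)
  have rho: "\<rho> = \<delta> / m" unfolding \<rho>_def q_def \<delta>_def m_def by (simp add: norm_divide)
  have rho0: "\<rho> > 0" using rho dl0 m0 by simp
  have qq: "q = of_real \<rho> * cis \<Delta>" using hD unfolding q_def \<rho>_def d_def \<beta>_def .
  have "cmod (c^2 * of_real ((cmod (det P))^2)) = cmod (q * (1 + u))" using main by simp
  hence xeq: "(cmod (det P))^2 = \<rho> * cmod (1 + u)"
    using hc by (simp add: norm_mult norm_power \<rho>_def)
  have n1u: "cmod (1 + u) > 0" using u1 by simp
  have "c^2 = cis \<Delta> * ((1+u) / of_real (cmod (1+u)))"
  proof -
    have "c^2 * of_real (\<rho> * cmod (1 + u)) = of_real \<rho> * cis \<Delta> * (1 + u)"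
      using main xeq qq by simp
    hence "of_real \<rho> * (c^2 * of_real (cmod (1 + u))) = of_real \<rho> * (cis \<Delta> * (1 + u))"
      by (simp add: ac_simps)
    hence "c^2 * of_real (cmod (1 + u)) = cis \<Delta> * (1 + u)" using rho0 by simp
    thus ?thesis using n1u by (simp add: field_simps)
  qed
  then obtain k g where kg: "c = (-1) powi k * cis (\<Delta>/2) + g"
    "inverse c = (-1) powi k * cis (- \<Delta> / 2) + cnj g" "(cmod g)^2 \<le> 2 * (cmod u)^2"
    using unit_root[OF hc u1] by blast
  have "cmod g \<le> e*(8*a+4)/\<delta>"
    using g_bound[OF a0 e0 es(1) dl0 norm_ge_zero kg(3) norm_ge_zero ub] .
  hence P1: "\<exists>(k::int) (g::complex).
          c = (-1) powi k * cis (\<Delta> / 2) + g \<and>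
          inverse c = (-1) powi k * cis (- \<Delta> / 2) + cnj g \<and>
          cmod g \<le> maxnorm E * (8 * maxnorm At + 4) / cmod (det At)"
    using kg unfolding e_def a_def \<delta>_def d_def by blast
  define p' where "p' = complex_of_real (cmod (det P))"
  define s' where "s' = complex_of_real (sqrt \<rho>)"
  define u' where "u' = complex_of_real (cmod (1 + u) - 1)"
  have "p'^2 = of_real ((cmod (det P))^2)" unfolding p'_def by simp
  hence hp: "p'^2 = of_real \<rho> * (1 + u')" unfolding u'_def using xeq by (simp add: algebra_simps)
  have "cmod u' = \<bar>cmod (1 + u) - 1\<bar>" unfolding u'_def by (simp only: norm_of_real)
  moreover have "\<bar>cmod (1 + u) - 1\<bar> \<le> cmod u" using norm_triangle_ineq3[of "1+u" 1] by simp
  ultimately have u'b: "cmod u' \<le> cmod u" by simp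
  have hs: "s'^2 = of_real \<rho>" unfolding s'_def using rho0
    by (simp flip: of_real_power)
  have hr: "Re (p' * cnj s') \<ge> 0" unfolding p'_def s'_def using rho0 by simp
  have rc: "(cmod (p' - s'))^2 \<le> 16/23 * cmod (complex_of_real \<rho>) * (cmod u')^2"
    using root_core[OF hp _ hs hr] u'b u916 by simp
  have "cmod (p' - s') = \<bar>cmod (det P) - sqrt \<rho>\<bar>" unfolding p'_def s'_def
    by (simp flip: of_real_diff)
  hence rc1: "\<bar>cmod (det P) - sqrt \<rho>\<bar>^2 \<le> 16/23 * \<rho> * (cmod u')^2"
    using rc rho0 by simp
  have rc2: "\<bar>cmod (det P) - sqrt \<rho>\<bar>^2 \<le> 16/23 * (\<delta>/m) * (cmod u')^2"
    using rc1 unfolding rho .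
  have "\<bar>cmod (det P) - sqrt \<rho>\<bar> \<le> e*(4*a+2)/sqrt(\<delta>*m)"
    using final_bound[OF a0 e0 es(1) dl0 m0 abs_ge_zero rc2 norm_ge_zero] u'b ub by linarith
  moreover have "sqrt (cmod (det At * det A)) = sqrt (\<delta>*m)"
    unfolding \<delta>_def m_def d_def \<beta>_def by (simp add: norm_mult)
  ultimately have P2: "\<exists>r::real.
          cmod (det P) = sqrt (cmod (det At / det A)) + r \<and>
          \<bar>r\<bar> \<le> maxnorm E * (4 * maxnorm At + 2) / sqrt (cmod (det At * det A))"
    unfolding e_def a_def \<rho>_def q_def d_def \<beta>_def
    by (intro exI[of _ "cmod (det P) - sqrt (cmod (det At / det A))"]) simp
  show ?thesis using P1 P2 by blast
qed

lemma part2: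
  fixes Bt B P F :: "complex^2^2"
  assumes iBt: "invertible Bt" and iB: "invertible B"
    and heq: "transpose P ** B ** P = Bt + F"
    and hF: "maxnorm F \<le> cmod (det Bt) / (8 * maxnorm Bt + 4)"
  shows "\<exists>(s::complex) (r::complex).
          s\<^sup>2 = det Bt / det B \<and>
          det P = s + r \<and>
          cmod r \<le> maxnorm F * (4 * maxnorm Bt + 2) / sqrt (cmod (det Bt * det B))"
proof -
  define a where "a = maxnorm Bt"
  define e where "e = maxnorm F"
  define d where "d = det Bt"
  define \<beta> where "\<beta> = det B"
  define \<delta> where "\<delta> = cmod d"
  define m where "m = cmod \<beta>"
  define D where "D = det (Bt + F) - d"
  define u where "u = D / d"
  define q where "q = d / \<beta>"
  define p where "p = det P"
  have a0: "a > 0" unfolding a_def using maxnorm_pos[OF iBt] .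
  have e0: "e \<ge> 0" unfolding e_def by (rule maxnorm_nonneg)
  have d0: "d \<noteq> 0" unfolding d_def using iBt invertible_det_nz by blast
  have b0: "\<beta> \<noteq> 0" unfolding \<beta>_def using iB invertible_det_nz by blast
  have dl0: "\<delta> > 0" unfolding \<delta>_def using d0 by simp
  have m0: "m > 0" unfolding m_def using b0 by simp
  have dle: "\<delta> \<le> 2 * a^2" unfolding \<delta>_def d_def a_def by (rule det_le)
  have es: "e \<le> a/4" "e * (4*a + 2*e) \<le> 9/16 * \<delta>"
    using e_small[OF a0 e0 _ dle] hF unfolding e_def a_def \<delta>_def d_def by auto
  have Db: "cmod D \<le> e * (4*a + 2*e)" unfolding D_def e_def a_def d_def by (rule det_pert)
  have ub: "cmod u \<le> e * (4*a + 2*e) / \<delta>" unfolding u_def \<delta>_def using Db dl0 d0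
    by (simp add: norm_divide divide_right_mono \<delta>_def)
  have "e * (4*a + 2*e) / \<delta> \<le> 9/16" using es(2) dl0 by (simp add: divide_le_eq)
  hence u916: "cmod u \<le> 9/16" using ub by linarith
  have "det (transpose P ** B ** P) = p^2 * \<beta>"
    by (simp add: det_mul p_def \<beta>_def power2_eq_square ac_simps)
  hence "p^2 * \<beta> = d * (1 + u)"
    using heq d0 unfolding u_def D_def d_def by (simp add: field_simps)
  hence hp: "p^2 = q * (1 + u)" unfolding q_def using b0 by (simp add: field_simps)
  define s0 where "s0 = csqrt q"
  define s where "s = (if Re (p * cnj s0) \<ge> 0 then s0 else - s0)"
  have hs: "s^2 = q" unfolding s_def s0_def by simp
  have hr: "Re (p * cnj s) \<ge> 0" unfolding s_def by auto
  have rc: "(cmod (p - s))^2 \<le> 16/23 * (\<delta>/m) * (cmod u)^2"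
    using root_core[OF hp u916 hs hr] unfolding q_def \<delta>_def m_def by (simp add: norm_divide)
  have "cmod (p - s) \<le> e*(4*a+2)/sqrt(\<delta>*m)"
    using final_bound[OF a0 e0 es(1) dl0 m0 norm_ge_zero rc norm_ge_zero ub] .
  moreover have "sqrt (cmod (det Bt * det B)) = sqrt (\<delta>*m)"
    unfolding \<delta>_def m_def d_def \<beta>_def by (simp add: norm_mult)
  ultimately show ?thesis using hs unfolding e_def a_def q_def d_def \<beta>_def p_def
    by (intro exI[of _ s] exI[of _ "det P - s"]) simp
qed

theorem lemma4p1:
  shows
  "(\<forall>(At::complex^2^2) (A::complex^2^2) (P::complex^2^2) (E::complex^2^2) (c::complex) (\<Delta>::real).
      invertible At \<and> invertible A \<and> invertible P \<and> cmod c = 1 \<and>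
      scal_mat c (conj_transpose P ** A ** P) = At + E \<and>
      maxnorm E \<le> cmod (det At) / (8 * maxnorm At + 4) \<and>
      det At / det A = of_real (cmod (det At / det A)) * cis \<Delta>
    \<longrightarrow>
      (\<exists>(k::int) (g::complex).
          c = (-1) powi k * cis (\<Delta> / 2) + g \<and>
          inverse c = (-1) powi k * cis (- \<Delta> / 2) + cnj g \<and>
          cmod g \<le> maxnorm E * (8 * maxnorm At + 4) / cmod (det At)) \<and>
      (\<exists>r::real.
          cmod (det P) = sqrt (cmod (det At / det A)) + r \<and>
          \<bar>r\<bar> \<le> maxnorm E * (4 * maxnorm At + 2) / sqrt (cmod (det At * det A))))
   \<and>
   (\<forall>(Bt::complex^2^2) (B::complex^2^2) (P::complex^2^2) (F::complex^2^2).
      invertible Bt \<and> invertible B \<and> invertible P \<and>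
      transpose P ** B ** P = Bt + F \<and>
      maxnorm F \<le> cmod (det Bt) / (8 * maxnorm Bt + 4)
    \<longrightarrow>
      (\<exists>(s::complex) (r::complex).
          s\<^sup>2 = det Bt / det B \<and>
          det P = s + r \<and>
          cmod r \<le> maxnorm F * (4 * maxnorm Bt + 2) / sqrt (cmod (det Bt * det B))))"
proof (rule conjI; intro allI impI)
  fix At A P E :: "complex^2^2" and c :: complex and \<Delta> :: real
  assume "invertible At \<and> invertible A \<and> invertible P \<and> cmod c = 1 \<and>
      scal_mat c (conj_transpose P ** A ** P) = At + E \<and>
      maxnorm E \<le> cmod (det At) / (8 * maxnorm At + 4) \<and>
      det At / det A = of_real (cmod (det At / det A)) * cis \<Delta>"
  thus "(\<exists>(k::int) (g::complex).
          c = (-1) powi k * cis (\<Delta> / 2) + g \<and>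
          inverse c = (-1) powi k * cis (- \<Delta> / 2) + cnj g \<and>
          cmod g \<le> maxnorm E * (8 * maxnorm At + 4) / cmod (det At)) \<and>
      (\<exists>r::real.
          cmod (det P) = sqrt (cmod (det At / det A)) + r \<and>
          \<bar>r\<bar> \<le> maxnorm E * (4 * maxnorm At + 2) / sqrt (cmod (det At * det A)))"
    using part1 by blast
next
  fix Bt B P F :: "complex^2^2"
  assume "invertible Bt \<and> invertible B \<and> invertible P \<and>
      transpose P ** B ** P = Bt + F \<and>
      maxnorm F \<le> cmod (det Bt) / (8 * maxnorm Bt + 4)"
  thus "\<exists>(s::complex) (r::complex).
          s\<^sup>2 = det Bt / det B \<and>
          det P = s + r \<and>
          cmod r \<le> maxnorm F * (4 * maxnorm Bt + 2) / sqrt (cmod (det Bt * det B))"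
    using part2 by blast
qed

end
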